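(* Let $\boldsymbol{\nu}$ be a bandit instance with $\nu_a=\mathrm{Bernoulli}(\mu_a)$ and $\mu_1>\mu_2\ge\dots\ge\mu_K$. Let $\Delta_a=\mu_1-\mu_a$ and $\Delta_{\min}=\min_{a\ne1}\Delta_a$. Then $$T^\star_{\mathrm{TV}}(\boldsymbol{\nu})=\frac{1}{\Delta_{\min}}+\sum_{a=2}^K\frac{1}{\Delta_a},\qquad\text{and}\qquad \frac{1}{\Delta_{\min}}\le T^\star_{\mathrm{TV}}(\boldsymbol{\nu})\le\frac{K}{\Delta_{\min}}.$$
   Context: $\big(T^\star_{\mathrm{TV}}(\boldsymbol{\nu})\big)^{-1}=\sup_{\omega\in\Sigma_K}\inf_{\boldsymbol{\lambda}\in\operatorname{Alt}(\boldsymbol{\nu})}\sum_{a=1}^K\omega_a\mathrm{TV}(\nu_a,\lambda_a)$, where $\Sigma_K$ is the probability simplex in $\mathbb{R}^K$, $\mathrm{TV}(P,Q)=\sup_A(P(A)-Q(A))$, and $\operatorname{Alt}(\boldsymbol{\nu})$ is the set of Bernoulli instances $\boldsymbol{\lambda}=(\mathrm{Bernoulli}(\rho_a))_{a\in[K]}$ whose optimal arm (arm of largest mean) differs from that of $\boldsymbol{\nu}$. *)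

theory Defs
  imports "HOL-Probability.Probability"
begin

definition TV :: "'a pmf \<Rightarrow> 'a pmf \<Rightarrow> real" where
  "TV P Q = (SUP A. measure_pmf.prob P A - measure_pmf.prob Q A)"

text \<open>Bandit instances with K arms indexed 1..K, given by the Bernoulli means.\<close>
definition bern_instance :: "nat \<Rightarrow> (nat \<Rightarrow> real) \<Rightarrow> bool" where
  "bern_instance K \<rho> \<longleftrightarrow> (\<forall>a\<in>{1..K}. 0 \<le> \<rho> a \<and> \<rho> a \<le> 1)"

definition opt_arms :: "nat \<Rightarrow> (nat \<Rightarrow> real) \<Rightarrow> nat set" where
  "opt_arms K \<rho> = {a\<in>{1..K}. \<forall>b\<in>{1..K}. \<rho> b \<le> \<rho> a}"

definition Alt :: "nat \<Rightarrow> (nat \<Rightarrow> real) \<Rightarrow> (nat \<Rightarrow> real) set" where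
  "Alt K \<mu> = {\<rho>. bern_instance K \<rho> \<and> opt_arms K \<rho> \<inter> opt_arms K \<mu> = {}}"

definition prob_simplex :: "nat \<Rightarrow> (nat \<Rightarrow> real) set" where
  "prob_simplex K = {\<omega>. (\<forall>a\<in>{1..K}. 0 \<le> \<omega> a) \<and> (\<Sum>a=1..K. \<omega> a) = 1}"

definition T_TV :: "nat \<Rightarrow> (nat \<Rightarrow> real) \<Rightarrow> real" where
  "T_TV K \<mu> = 1 / (SUP \<omega>\<in>prob_simplex K. INF \<rho>\<in>Alt K \<mu>.
      \<Sum>a=1..K. \<omega> a * TV (bernoulli_pmf (\<mu> a)) (bernoulli_pmf (\<rho> a)))"

end

theory Submission
  imports Defs
begin

lemma bern_meas:
  assumes "0 \<le> r" "r \<le> 1"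
  shows "measure_pmf.prob (bernoulli_pmf r) A =
      (if True \<in> A then r else 0) + (if False \<in> A then 1 - r else 0)"
proof -
  have "A \<in> Pow {True, False}" by auto
  hence "A = {} \<or> A = {True} \<or> A = {False} \<or> A = {True, False}" by auto
  thus ?thesis using assms
    by (auto simp: measure_measure_pmf_finite)
qed

lemma TV_bern:
  assumes "0 \<le> p" "p \<le> 1" "0 \<le> q" "q \<le> 1"
  shows "TV (bernoulli_pmf p) (bernoulli_pmf q) = \<bar>p - q\<bar>"
proof -
  define f where "f = (\<lambda>A. measure_pmf.prob (bernoulli_pmf p) A - measure_pmf.prob (bernoulli_pmf q) A)"
  have fA: "f A = (if True \<in> A then p - q else 0) + (if False \<in> A then q - p else 0)" for A
    unfolding f_def using bern_meas[OF assms(1,2), of A] bern_meas[OF assms(3,4), of A] by simp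
  have "Sup (range f) = \<bar>p - q\<bar>"
  proof (rule cSup_eq_maximum)
    show "\<bar>p - q\<bar> \<in> range f"
    proof (cases "p \<ge> q")
      case True
      hence "f {True} = \<bar>p - q\<bar>" using fA[of "{True}"] by simp
      thus ?thesis by (metis rangeI)
    next
      case False
      hence "f {False} = \<bar>p - q\<bar>" using fA[of "{False}"] by simp
      thus ?thesis by (metis rangeI)
    qed
  next
    fix x assume "x \<in> range f"
    then obtain A where "x = f A" by auto
    thus "x \<le> \<bar>p - q\<bar>" using fA[of A] by auto
  qed
  thus ?thesis unfolding TV_def f_def by simp
qed

theorem proposition1:
  fixes K :: nat and \<mu> :: "nat \<Rightarrow> real"
  assumes "K \<ge> 2"
    and "bern_instance K \<mu>"
    and "\<mu> 1 > \<mu> 2"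
    and "\<And>a b. 2 \<le> a \<Longrightarrow> a \<le> b \<Longrightarrow> b \<le> K \<Longrightarrow> \<mu> b \<le> \<mu> a"
  defines "\<Delta>min \<equiv> Min ((\<lambda>a. \<mu> 1 - \<mu> a) ` {2..K})"
  shows "T_TV K \<mu> = 1 / \<Delta>min + (\<Sum>a=2..K. 1 / (\<mu> 1 - \<mu> a))
       \<and> 1 / \<Delta>min \<le> T_TV K \<mu> \<and> T_TV K \<mu> \<le> real K / \<Delta>min"
proof -
  define Dl where "Dl = (\<lambda>a. \<mu> 1 - \<mu> a)"
  define D where "D = \<mu> 1 - \<mu> 2"
  have D: "D > 0" using assms(3) D_def by simp
  have mu_le2: "\<mu> a \<le> \<mu> 2" if "a \<in> {2..K}" for a using assms(4)[of 2 a] that by auto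
  have Dpos: "Dl a > 0" if "a \<in> {2..K}" for a using mu_le2[OF that] assms(3) Dl_def by simp
  have Dge: "D \<le> Dl a" if "a \<in> {2..K}" for a using mu_le2[OF that] Dl_def D_def by simp
  have Dmin: "\<Delta>min = D" unfolding \<Delta>min_def
    by (rule Min_eqI) (use Dge assms(1) Dl_def D_def in auto)
  define S where "S = 1 / D + (\<Sum>a=2..K. 1 / Dl a)"
  have sum_nn: "(\<Sum>a=2..K. 1 / Dl a) \<ge> 0"
    using Dpos by (intro sum_nonneg) (simp add: less_imp_le)
  have S: "S > 0" unfolding S_def using sum_nn D by (intro add_pos_nonneg) simp_all
  have mub: "0 \<le> \<mu> a \<and> \<mu> a \<le> 1" if "a \<in> {1..K}" for a
    using assms(2) that unfolding bern_instance_def by auto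
  have split1: "{1..K} = insert 1 {2..K}" using assms(1) by auto
  have opt_mu: "opt_arms K \<mu> = {1}"
  proof -
    have "a \<notin> opt_arms K \<mu>" if "a \<noteq> 1" for a
    proof
      assume "a \<in> opt_arms K \<mu>"
      hence a: "a \<in> {2..K}" "\<mu> 1 \<le> \<mu> a" using that assms(1) unfolding opt_arms_def by auto
      thus False using mu_le2[OF a(1)] assms(3) by simp
    qed
    moreover have "1 \<in> opt_arms K \<mu>"
    proof -
      have "\<mu> b \<le> \<mu> 1" if "b \<in> {1..K}" for b
      proof (cases "b = 1")
        case False
        hence "b \<in> {2..K}" using that by auto
        thus ?thesis using mu_le2 assms(3) by force
      qed simp
      thus ?thesis unfolding opt_arms_def using assms(1) by auto
    qed
    ultimately show ?thesis by blast
  qed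
  have Alt_iff: "\<rho> \<in> Alt K \<mu> \<longleftrightarrow> bern_instance K \<rho> \<and> (\<exists>b\<in>{2..K}. \<rho> b > \<rho> 1)" for \<rho>
  proof -
    have "opt_arms K \<rho> \<inter> {1} = {} \<longleftrightarrow> (\<exists>b\<in>{1..K}. \<rho> b > \<rho> 1)"
      unfolding opt_arms_def using assms(1) by (auto simp: not_le)
    also have "\<dots> \<longleftrightarrow> (\<exists>b\<in>{2..K}. \<rho> b > \<rho> 1)"
      unfolding split1 by auto
    finally show ?thesis unfolding Alt_def opt_mu by simp
  qed
  define C where "C = (\<lambda>\<omega> \<rho>. \<Sum>a=1..K. \<omega> a * \<bar>\<mu> a - \<rho> a\<bar>)"
  define F where "F = (\<lambda>\<omega>. INF \<rho>\<in>Alt K \<mu>. C \<omega> \<rho>)"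
  have TT: "T_TV K \<mu> = 1 / (SUP \<omega>\<in>prob_simplex K. F \<omega>)"
  proof -
    have "(INF \<rho>\<in>Alt K \<mu>. \<Sum>a=1..K. \<omega> a * TV (bernoulli_pmf (\<mu> a)) (bernoulli_pmf (\<rho> a)))
        = F \<omega>" for \<omega>
      unfolding F_def C_def
    proof (rule INF_cong[OF refl], rule sum.cong[OF refl])
      fix \<rho> a assume r: "\<rho> \<in> Alt K \<mu>" and a: "a \<in> {1..K}"
      have "0 \<le> \<rho> a \<and> \<rho> a \<le> 1" using r a unfolding Alt_iff bern_instance_def by auto
      thus "\<omega> a * TV (bernoulli_pmf (\<mu> a)) (bernoulli_pmf (\<rho> a)) = \<omega> a * \<bar>\<mu> a - \<rho> a\<bar>"
        using mub[OF a] TV_bern by simp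
    qed
    thus ?thesis unfolding T_TV_def by simp
  qed
  define \<rho>0 where "\<rho>0 = (\<lambda>a::nat. if a = 2 then 1 else (0::real))"
  have "\<rho>0 \<in> Alt K \<mu>" unfolding Alt_iff bern_instance_def \<rho>0_def using assms(1)
    by (auto intro!: bexI[of _ 2])
  hence Alt_ne: "Alt K \<mu> \<noteq> {}" by blast
  have Cnn: "0 \<le> C \<omega> \<rho>" if "\<omega> \<in> prob_simplex K" for \<omega> \<rho>
    using that unfolding C_def prob_simplex_def by (auto intro!: sum_nonneg)
  have upper: "F \<omega> \<le> 1 / S" if om: "\<omega> \<in> prob_simplex K" for \<omega>
  proof -
    have om0: "0 \<le> \<omega> a" if "a \<in> {1..K}" for a using om that unfolding prob_simplex_def by auto
    have om1: "\<omega> a \<le> 1" if "a \<in> {1..K}" for a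
    proof -
      have "\<omega> a \<le> sum \<omega> {1..K}" by (rule member_le_sum) (use that om0 in auto)
      thus ?thesis using om unfolding prob_simplex_def by simp
    qed
    have "\<exists>b\<in>{2..K}. min (\<omega> 1) (\<omega> b) * Dl b \<le> 1 / S"
    proof (rule ccontr)
      assume "\<not> ?thesis"
      hence h: "min (\<omega> 1) (\<omega> b) * Dl b > 1 / S" if "b \<in> {2..K}" for b using that by (meson not_le)
      have "2 \<in> {2..K}" using assms(1) by auto
      hence "1 / S < min (\<omega> 1) (\<omega> 2) * D" using h[of 2] Dl_def D_def by simp
      moreover have "min (\<omega> 1) (\<omega> 2) * D \<le> \<omega> 1 * D" by (rule mult_right_mono) (use D in simp_all)
      ultimately have "\<omega> 1 * D > 1 / S" by linarith
      hence h1: "\<omega> 1 > 1 / S * (1 / D)" using D S by (simp add: field_simps)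
      have h2: "\<omega> b > 1 / S * (1 / Dl b)" if "b \<in> {2..K}" for b
      proof -
        have "min (\<omega> 1) (\<omega> b) * Dl b \<le> \<omega> b * Dl b" by (rule mult_right_mono) (use Dpos[OF that] in simp_all)
        hence "\<omega> b * Dl b > 1 / S" using h[OF that] by linarith
        thus ?thesis using Dpos[OF that] S by (simp add: field_simps)
      qed
      have "(\<Sum>b=2..K. 1 / S * (1 / Dl b)) < (\<Sum>b=2..K. \<omega> b)"
        by (rule sum_strict_mono) (use h2 assms(1) in auto)
      hence "1 / S * (1 / D) + (\<Sum>b=2..K. 1 / S * (1 / Dl b)) < \<omega> 1 + (\<Sum>b=2..K. \<omega> b)"
        using h1 by linarith
      also have "\<omega> 1 + (\<Sum>b=2..K. \<omega> b) = 1"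
        using om unfolding prob_simplex_def split1 by simp
      also have "1 / S * (1 / D) + (\<Sum>b=2..K. 1 / S * (1 / Dl b)) = 1 / S * S"
        unfolding S_def by (simp add: sum_distrib_left distrib_left)
      finally show False using S by simp
    qed
    then obtain b where b: "b \<in> {2..K}" "min (\<omega> 1) (\<omega> b) * Dl b \<le> 1 / S" by blast
    have b1: "b \<noteq> 1" using b by auto
    have bK: "b \<in> {1..K}" "1 \<in> {1..K}" using b assms(1) by auto
    have Clow: "F \<omega> \<le> C \<omega> \<rho>" if "\<rho> \<in> Alt K \<mu>" for \<rho>
      unfolding F_def by (rule cINF_lower[OF bdd_belowI2[of _ 0]]) (use Cnn[OF om] that in auto)
    have C2: "C \<omega> \<rho> = \<omega> 1 * \<bar>\<mu> 1 - \<rho> 1\<bar> + \<omega> b * \<bar>\<mu> b - \<rho> b\<bar>"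
      if "\<And>a. a \<noteq> 1 \<Longrightarrow> a \<noteq> b \<Longrightarrow> \<rho> a = \<mu> a" for \<rho>
    proof -
      have "C \<omega> \<rho> = (\<Sum>a\<in>{1,b}. \<omega> a * \<bar>\<mu> a - \<rho> a\<bar>)"
        unfolding C_def by (rule sum.mono_neutral_right) (use bK that in auto)
      thus ?thesis using b1 by simp
    qed
    have eps: "F \<omega> \<le> min (\<omega> 1) (\<omega> b) * Dl b + \<delta>" if d: "0 < \<delta>" "\<delta> \<le> Dl b" for \<delta>
    proof (cases "\<omega> 1 \<le> \<omega> b")
      case True
      define \<rho> where "\<rho> = \<mu>(1 := \<mu> b, b := \<mu> b + \<delta>)"
      have "bern_instance K \<rho>" unfolding bern_instance_def
      proof
        fix a assume a: "a \<in> {1..K}"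
        show "0 \<le> \<rho> a \<and> \<rho> a \<le> 1" using mub[OF a] mub[OF bK(1)] mub[OF bK(2)] d b1
          unfolding \<rho>_def Dl_def by auto
      qed
      moreover have "\<rho> b > \<rho> 1" using b1 d \<rho>_def by auto
      ultimately have "\<rho> \<in> Alt K \<mu>" unfolding Alt_iff using b(1) by blast
      hence "F \<omega> \<le> C \<omega> \<rho>" by (rule Clow)
      also have "C \<omega> \<rho> = \<omega> 1 * Dl b + \<omega> b * \<delta>"
        by (subst C2) (use b1 d Dpos[OF b(1)] in \<open>auto simp: \<rho>_def Dl_def\<close>)
      also have "\<dots> \<le> min (\<omega> 1) (\<omega> b) * Dl b + \<delta>"
        using True om1[OF bK(1)] d by (simp add: mult_left_le_one_le)
      finally show ?thesis .
    next
      case False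
      define \<rho> where "\<rho> = \<mu>(1 := \<mu> 1 - \<delta>, b := \<mu> 1)"
      have "bern_instance K \<rho>" unfolding bern_instance_def
      proof
        fix a assume a: "a \<in> {1..K}"
        show "0 \<le> \<rho> a \<and> \<rho> a \<le> 1" using mub[OF a] mub[OF bK(1)] mub[OF bK(2)] d b1
          unfolding \<rho>_def Dl_def by auto
      qed
      moreover have "\<rho> b > \<rho> 1" using b1 d \<rho>_def by auto
      ultimately have "\<rho> \<in> Alt K \<mu>" unfolding Alt_iff using b(1) by blast
      hence "F \<omega> \<le> C \<omega> \<rho>" by (rule Clow)
      also have "C \<omega> \<rho> = \<omega> 1 * \<delta> + \<omega> b * Dl b"
        by (subst C2) (use b1 d Dpos[OF b(1)] in \<open>auto simp: \<rho>_def Dl_def\<close>)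
      also have "\<dots> \<le> min (\<omega> 1) (\<omega> b) * Dl b + \<delta>"
        using False om1[OF bK(2)] d by (simp add: mult_left_le_one_le)
      finally show ?thesis .
    qed
    have "F \<omega> \<le> min (\<omega> 1) (\<omega> b) * Dl b"
    proof (rule field_le_epsilon)
      fix e :: real assume e: "0 < e"
      have "F \<omega> \<le> min (\<omega> 1) (\<omega> b) * Dl b + min e (Dl b)"
        by (rule eps) (use e Dpos[OF b(1)] in auto)
      thus "F \<omega> \<le> min (\<omega> 1) (\<omega> b) * Dl b + e" by linarith
    qed
    thus ?thesis using b(2) by linarith
  qed
  define \<omega>s where "\<omega>s = (\<lambda>a. if a = 1 then 1 / (S * D) else 1 / (S * Dl a))"
  have ws: "\<omega>s \<in> prob_simplex K"
    unfolding prob_simplex_def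
  proof (intro CollectI conjI ballI)
    fix a assume a: "a \<in> {1..K}"
    show "0 \<le> \<omega>s a"
    proof (cases "a = 1")
      case False
      hence "a \<in> {2..K}" using a by auto
      thus ?thesis using Dpos S False unfolding \<omega>s_def by (simp add: less_imp_le)
    qed (use S D \<omega>s_def in simp)
  next
    have "(\<Sum>a=1..K. \<omega>s a) = 1 / (S * D) + (\<Sum>a=2..K. 1 / (S * Dl a))"
      unfolding split1 by (simp add: \<omega>s_def)
    also have "\<dots> = 1 / S * S" unfolding S_def
      by (simp add: sum_distrib_left distrib_left)
    finally show "(\<Sum>a=1..K. \<omega>s a) = 1" using S by simp
  qed
  have lower: "1 / S \<le> F \<omega>s" unfolding F_def
  proof (rule cINF_greatest[OF Alt_ne])
    fix \<rho> assume r: "\<rho> \<in> Alt K \<mu>"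
    then obtain b where b: "b \<in> {2..K}" "\<rho> b > \<rho> 1" unfolding Alt_iff by auto
    have b1: "b \<noteq> 1" using b by auto
    have bK: "b \<in> {1..K}" "1 \<in> {1..K}" using b assms(1) by auto
    have "(\<Sum>a\<in>{1,b}. \<omega>s a * \<bar>\<mu> a - \<rho> a\<bar>) \<le> C \<omega>s \<rho>"
      unfolding C_def by (rule sum_mono2) (use bK ws in \<open>auto simp: prob_simplex_def\<close>)
    hence "\<omega>s 1 * \<bar>\<mu> 1 - \<rho> 1\<bar> + \<omega>s b * \<bar>\<mu> b - \<rho> b\<bar> \<le> C \<omega>s \<rho>" using b1 by simp
    moreover have "1 / (S * Dl b) \<le> \<omega>s 1"
      unfolding \<omega>s_def using Dge[OF b(1)] D S by (simp add: frac_le)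
    moreover have "\<omega>s b = 1 / (S * Dl b)" using b1 \<omega>s_def by simp
    moreover have "Dl b \<le> \<bar>\<mu> 1 - \<rho> 1\<bar> + \<bar>\<mu> b - \<rho> b\<bar>" using b(2) unfolding Dl_def by linarith
    moreover have "0 < 1 / (S * Dl b)" using S Dpos[OF b(1)] by simp
    ultimately have "1 / (S * Dl b) * Dl b \<le> C \<omega>s \<rho>"
    proof -
      assume A: "\<omega>s 1 * \<bar>\<mu> 1 - \<rho> 1\<bar> + \<omega>s b * \<bar>\<mu> b - \<rho> b\<bar> \<le> C \<omega>s \<rho>"
        "1 / (S * Dl b) \<le> \<omega>s 1" "\<omega>s b = 1 / (S * Dl b)"
        "Dl b \<le> \<bar>\<mu> 1 - \<rho> 1\<bar> + \<bar>\<mu> b - \<rho> b\<bar>" "0 < 1 / (S * Dl b)"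
      have "1 / (S * Dl b) * Dl b \<le> 1 / (S * Dl b) * (\<bar>\<mu> 1 - \<rho> 1\<bar> + \<bar>\<mu> b - \<rho> b\<bar>)"
        by (rule mult_left_mono) (use A in simp_all)
      also have "\<dots> = 1 / (S * Dl b) * \<bar>\<mu> 1 - \<rho> 1\<bar> + \<omega>s b * \<bar>\<mu> b - \<rho> b\<bar>"
        using A(3) by (simp add: distrib_left)
      also have "1 / (S * Dl b) * \<bar>\<mu> 1 - \<rho> 1\<bar> \<le> \<omega>s 1 * \<bar>\<mu> 1 - \<rho> 1\<bar>"
        by (rule mult_right_mono) (use A in simp_all)
      finally show ?thesis using A(1) by linarith
    qed
    thus "1 / S \<le> C \<omega>s \<rho>" using Dpos[OF b(1)] by simp
  qed
  have "(SUP \<omega>\<in>prob_simplex K. F \<omega>) = 1 / S"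
  proof (rule antisym)
    show "(SUP \<omega>\<in>prob_simplex K. F \<omega>) \<le> 1 / S"
      by (rule cSUP_least) (use ws upper in auto)
    have "F \<omega>s \<le> (SUP \<omega>\<in>prob_simplex K. F \<omega>)"
      by (rule cSUP_upper[OF ws bdd_aboveI2[of _ _ "1/S"]]) (use upper in auto)
    thus "1 / S \<le> (SUP \<omega>\<in>prob_simplex K. F \<omega>)" using lower by linarith
  qed
  hence T: "T_TV K \<mu> = S" using TT S by simp
  have "(\<Sum>a=2..K. 1 / Dl a) \<le> (\<Sum>a=2..K. 1 / D)"
    by (rule sum_mono) (use Dge D in \<open>auto simp: frac_le\<close>)
  also have "\<dots> = (real K - 1) / D" using assms(1) by simp
  finally have "S \<le> 1 / D + (real K - 1) / D" unfolding S_def by linarith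
  also have "\<dots> = real K / D" by (simp add: add_divide_distrib[symmetric])
  finally have up: "S \<le> real K / D" .
  show ?thesis unfolding T Dmin using up sum_nn unfolding S_def Dl_def by simp
qed

end
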